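(* Let $R$ be a Noetherian local ring, $I,J$ ideals of $R$ and $K\subseteq I$ an ideal. Let $\bar J=(J+K)/K$ and $\bar I=I/K$ in $R/K$. Then $\operatorname{ar}_{\bar J}(\bar I)\le\operatorname{ar}_J(I)$.
   Context: For ideals $\mathfrak a,\mathfrak b$ of a Noetherian local ring, $\operatorname{ar}_{\mathfrak b}(\mathfrak a)$ is the least $c$ such that $\mathfrak b^n\cap\mathfrak a=\mathfrak b^{n-c}(\mathfrak b^c\cap\mathfrak a)$ for all $n\ge c$. *)

theory Defs
  imports "HOL-Algebra.Algebra" "HOL-Library.Extended_Nat"
begin

definition local_ring :: "('a, 'b) ring_scheme \<Rightarrow> bool" where
  "local_ring R \<longleftrightarrow> cring R \<and> (\<exists>!M. maximalideal M R)"

primrec ideal_pow :: "('a, 'b) ring_scheme \<Rightarrow> 'a set \<Rightarrow> nat \<Rightarrow> 'a set" where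
  "ideal_pow R J 0 = carrier R"
| "ideal_pow R J (Suc n) = ideal_prod R J (ideal_pow R J n)"

definition quot_ideal :: "('a, 'b) ring_scheme \<Rightarrow> 'a set \<Rightarrow> 'a set \<Rightarrow> 'a set set" where
  "quot_ideal R K A = (\<lambda>a. K +>\<^bsub>R\<^esub> a) ` A"

text \<open>The Artin--Rees number ar_J(I): least c with J^n \<inter> I = J^(n-c) (J^c \<inter> I)
  for all n \<ge> c; value \<infinity> if no such c exists (never the case in a Noetherian ring).\<close>
definition artin_rees_number :: "('a, 'b) ring_scheme \<Rightarrow> 'a set \<Rightarrow> 'a set \<Rightarrow> enat" where
  "artin_rees_number R J I =
     (INF c \<in> {c::nat. \<forall>n\<ge>c. ideal_pow R J n \<inter> I =
                  ideal_prod R (ideal_pow R J (n - c)) (ideal_pow R J c \<inter> I)}. enat c)"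

end

theory Submission
  imports Defs
begin

lemma ideal_prod_carrier_gen:
  assumes "ring R" "A \<subseteq> carrier R" "B \<subseteq> carrier R"
  shows "ideal_prod R A B \<subseteq> carrier R"
proof
  fix s assume "s \<in> ideal_prod R A B" thus "s \<in> carrier R"
    by (induct s rule: ideal_prod.induct)
       (use assms in \<open>auto intro: ring.ring_simprules\<close>)
qed

lemma hom_ideal_prod:
  assumes R: "ring R" and S: "ring S" and h: "h \<in> ring_hom R S"
    and A: "A \<subseteq> carrier R" and B: "B \<subseteq> carrier R"
  shows "h ` ideal_prod R A B = ideal_prod S (h ` A) (h ` B)"
proof
  show "h ` ideal_prod R A B \<subseteq> ideal_prod S (h ` A) (h ` B)"
  proof
    fix y assume "y \<in> h ` ideal_prod R A B"
    then obtain s where s: "s \<in> ideal_prod R A B" "y = h s" by auto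
    have "h s \<in> ideal_prod S (h ` A) (h ` B)" using s(1)
    proof (induct s rule: ideal_prod.induct)
      case (prod i j)
      have "h (i \<otimes>\<^bsub>R\<^esub> j) = h i \<otimes>\<^bsub>S\<^esub> h j"
        using h A B prod by (auto intro: ring_hom_mult)
      then show ?case using prod by (auto intro: ideal_prod.prod)
    next
      case (sum s1 s2)
      have "s1 \<in> carrier R" "s2 \<in> carrier R"
        using sum ideal_prod_carrier_gen[OF R A B] by auto
      then have "h (s1 \<oplus>\<^bsub>R\<^esub> s2) = h s1 \<oplus>\<^bsub>S\<^esub> h s2"
        using h by (auto intro: ring_hom_add)
      then show ?case using sum by (auto intro: ideal_prod.sum)
    qed
    then show "y \<in> ideal_prod S (h ` A) (h ` B)" using s by simp
  qed
next
  show "ideal_prod S (h ` A) (h ` B) \<subseteq> h ` ideal_prod R A B"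
  proof
    fix y assume "y \<in> ideal_prod S (h ` A) (h ` B)"
    then show "y \<in> h ` ideal_prod R A B"
    proof (induct y rule: ideal_prod.induct)
      case (prod i j)
      then obtain a b where ab: "a \<in> A" "b \<in> B" "i = h a" "j = h b" by auto
      have "h (a \<otimes>\<^bsub>R\<^esub> b) = i \<otimes>\<^bsub>S\<^esub> j"
        using h A B ab by (auto intro: ring_hom_mult)
      moreover have "a \<otimes>\<^bsub>R\<^esub> b \<in> ideal_prod R A B" using ab by (auto intro: ideal_prod.prod)
      ultimately show ?case by (metis image_eqI)
    next
      case (sum s1 s2)
      then obtain a b where ab: "a \<in> ideal_prod R A B" "b \<in> ideal_prod R A B" "s1 = h a" "s2 = h b" by auto
      have "a \<in> carrier R" "b \<in> carrier R"
        using ab ideal_prod_carrier_gen[OF R A B] by auto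
      then have "h (a \<oplus>\<^bsub>R\<^esub> b) = s1 \<oplus>\<^bsub>S\<^esub> s2"
        using h ab by (auto intro: ring_hom_add)
      moreover have "a \<oplus>\<^bsub>R\<^esub> b \<in> ideal_prod R A B" using ab by (auto intro: ideal_prod.sum)
      ultimately show ?case by (metis image_eqI)
    qed
  qed
qed

lemma ideal_pow_carrier:
  assumes "ring R" "J \<subseteq> carrier R"
  shows "ideal_pow R J n \<subseteq> carrier R"
proof (induct n)
  case (Suc n) then show ?case using ideal_prod_carrier_gen[OF assms(1) assms(2) Suc] by simp
qed simp

lemma quot_pow:
  assumes K: "ideal K R" and J: "J \<subseteq> carrier R"
  shows "ideal_pow (R Quot K) (quot_ideal R K J) n = quot_ideal R K (ideal_pow R J n)"
proof (induct n)
  case 0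
  show ?case unfolding quot_ideal_def
    by (auto simp add: FactRing_def A_RCOSETS_def' image_def)
next
  case (Suc n)
  have R: "ring R" using K ideal.axioms(2) by blast
  show ?case
    using hom_ideal_prod[OF R ideal.quotient_is_ring[OF K] ideal.rcos_ring_hom[OF K] J
        ideal_pow_carrier[OF R J]] Suc
    unfolding quot_ideal_def by simp
qed


lemma quot_sum:
  assumes J: "ideal J R" and K: "ideal K R"
  shows "quot_ideal R K (J <+>\<^bsub>R\<^esub> K) = quot_ideal R K J"
proof
  have R: "ring R" using K ideal.axioms(2) by blast
  have AG: "abelian_group R" by (rule ring.is_abelian_group[OF R])
  have sg: "subgroup K (add_monoid R)"
    by (rule additive_subgroup.a_subgroup[OF ideal.axioms(1)[OF K]])
  show "quot_ideal R K (J <+>\<^bsub>R\<^esub> K) \<subseteq> quot_ideal R K J"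
  proof
    fix y assume "y \<in> quot_ideal R K (J <+>\<^bsub>R\<^esub> K)"
    then obtain x where x: "x \<in> J <+>\<^bsub>R\<^esub> K" "y = K +>\<^bsub>R\<^esub> x"
      unfolding quot_ideal_def by blast
    from x(1) obtain j k where jk: "j \<in> J" "k \<in> K" "x = j \<oplus>\<^bsub>R\<^esub> k"
      unfolding set_add_def' by blast
    have jc: "j \<in> carrier R" by (rule ideal.Icarr[OF J jk(1)])
    have kc: "k \<in> carrier R" by (rule ideal.Icarr[OF K jk(2)])
    have "j \<oplus>\<^bsub>R\<^esub> k = k \<oplus>\<^bsub>R\<^esub> j"
      by (rule abelian_monoid.a_comm[OF abelian_group.axioms(1)[OF AG] jc kc])
    then have "x \<in> K +>\<^bsub>R\<^esub> j" using jk unfolding a_r_coset_def' by blast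
    then have "K +>\<^bsub>R\<^esub> j = K +>\<^bsub>R\<^esub> x"
      by (rule abelian_group.a_repr_independence[OF AG _ jc sg])
    then show "y \<in> quot_ideal R K J" using jk x unfolding quot_ideal_def by blast
  qed
next
  have R: "ring R" using K ideal.axioms(2) by blast
  have AG: "abelian_group R" by (rule ring.is_abelian_group[OF R])
  show "quot_ideal R K J \<subseteq> quot_ideal R K (J <+>\<^bsub>R\<^esub> K)"
  proof
    fix y assume "y \<in> quot_ideal R K J"
    then obtain j where j: "j \<in> J" "y = K +>\<^bsub>R\<^esub> j" unfolding quot_ideal_def by blast
    have jc: "j \<in> carrier R" by (rule ideal.Icarr[OF J j(1)])
    have z: "\<zero>\<^bsub>R\<^esub> \<in> K" by (rule additive_subgroup.zero_closed[OF ideal.axioms(1)[OF K]])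
    have "j \<oplus>\<^bsub>R\<^esub> \<zero>\<^bsub>R\<^esub> = j"
      by (rule abelian_monoid.r_zero[OF abelian_group.axioms(1)[OF AG] jc])
    then have "j \<in> J <+>\<^bsub>R\<^esub> K" using j z unfolding set_add_def' by force
    then show "y \<in> quot_ideal R K (J <+>\<^bsub>R\<^esub> K)" using j unfolding quot_ideal_def by blast
  qed
qed

lemma quot_inter:
  assumes I: "ideal I R" and K: "ideal K R" and KI: "K \<subseteq> I" and A: "A \<subseteq> carrier R"
  shows "quot_ideal R K A \<inter> quot_ideal R K I = quot_ideal R K (A \<inter> I)"
proof
  show "quot_ideal R K (A \<inter> I) \<subseteq> quot_ideal R K A \<inter> quot_ideal R K I"
    unfolding quot_ideal_def by blast
next
  show "quot_ideal R K A \<inter> quot_ideal R K I \<subseteq> quot_ideal R K (A \<inter> I)"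
  proof
    fix y assume y: "y \<in> quot_ideal R K A \<inter> quot_ideal R K I"
    then obtain a where a: "a \<in> A" "y = K +>\<^bsub>R\<^esub> a"
      unfolding quot_ideal_def by blast
    from y obtain b where b: "b \<in> I" "y = K +>\<^bsub>R\<^esub> b"
      unfolding quot_ideal_def by blast
    have AS: "abelian_subgroup K R"
      by (rule abelian_subgroupI3[OF ideal.axioms(1)[OF K] ring.is_abelian_group[OF ideal.axioms(2)[OF K]]])
    have ac: "a \<in> carrier R" using a A by blast
    have "a \<in> K +>\<^bsub>R\<^esub> a" by (rule abelian_subgroup.a_rcos_self[OF AS ac])
    then have "a \<in> K +>\<^bsub>R\<^esub> b" using a b by simp
    then obtain k where k: "k \<in> K" "a = k \<oplus>\<^bsub>R\<^esub> b" unfolding a_r_coset_def' by blast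
    have "k \<in> I" using k KI by blast
    then have "k \<oplus>\<^bsub>R\<^esub> b \<in> I"
      by (rule additive_subgroup.a_closed[OF ideal.axioms(1)[OF I] _ b(1)])
    then have "a \<in> A \<inter> I" using k a by simp
    then show "y \<in> quot_ideal R K (A \<inter> I)" using a unfolding quot_ideal_def by blast
  qed
qed

theorem lemma2p6:
  fixes R :: "('a, 'b) ring_scheme" and I J K :: "'a set"
  assumes "noetherian_ring R" and "local_ring R"
    and "ideal I R" and "ideal J R" and "ideal K R" and "K \<subseteq> I"
  shows "artin_rees_number (R Quot K) (quot_ideal R K (J <+>\<^bsub>R\<^esub> K)) (quot_ideal R K I)
           \<le> artin_rees_number R J I"
  unfolding artin_rees_number_def
proof (rule INF_mono)
  fix c assume c: "c \<in> {c::nat. \<forall>n\<ge>c. ideal_pow R J n \<inter> I =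
                  ideal_prod R (ideal_pow R J (n - c)) (ideal_pow R J c \<inter> I)}"
  have c': "\<forall>n\<ge>c. ideal_pow R J n \<inter> I =
                  ideal_prod R (ideal_pow R J (n - c)) (ideal_pow R J c \<inter> I)"
    using c by (rule CollectD)
  have R: "ring R" by (rule ideal.axioms(2)[OF assms(5)])
  have Jc: "J \<subseteq> carrier R" by (rule subsetI, rule ideal.Icarr[OF assms(4)])
  have Ic: "I \<subseteq> carrier R" by (rule subsetI, rule ideal.Icarr[OF assms(3)])
  let ?Q = "R Quot K" and ?p = "quot_ideal R K"
  have pw: "\<And>n. ideal_pow ?Q (?p (J <+>\<^bsub>R\<^esub> K)) n = ?p (ideal_pow R J n)"
    using quot_sum[OF assms(4,5)] quot_pow[OF assms(5) Jc] by simp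
  have P: "\<forall>n\<ge>c. ideal_pow ?Q (?p (J <+>\<^bsub>R\<^esub> K)) n \<inter> ?p I =
          ideal_prod ?Q (ideal_pow ?Q (?p (J <+>\<^bsub>R\<^esub> K)) (n - c))
             (ideal_pow ?Q (?p (J <+>\<^bsub>R\<^esub> K)) c \<inter> ?p I)"
  proof (intro allI impI)
    fix n assume n: "c \<le> n"
    have "ideal_pow ?Q (?p (J <+>\<^bsub>R\<^esub> K)) n \<inter> ?p I = ?p (ideal_pow R J n \<inter> I)"
      using pw quot_inter[OF assms(3,5,6) ideal_pow_carrier[OF R Jc]] by simp
    also have "\<dots> = ?p (ideal_prod R (ideal_pow R J (n - c)) (ideal_pow R J c \<inter> I))"
      by (rule arg_cong[where f = ?p], rule c'[rule_format, OF n])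
    also have "\<dots> = ideal_prod ?Q (?p (ideal_pow R J (n - c))) (?p (ideal_pow R J c \<inter> I))"
      unfolding quot_ideal_def
      by (rule hom_ideal_prod[OF R ideal.quotient_is_ring[OF assms(5)] ideal.rcos_ring_hom[OF assms(5)]])
         (use ideal_pow_carrier[OF R Jc, of "n - c"] ideal_pow_carrier[OF R Jc, of c] in blast)+
    also have "\<dots> = ideal_prod ?Q (ideal_pow ?Q (?p (J <+>\<^bsub>R\<^esub> K)) (n - c))
             (ideal_pow ?Q (?p (J <+>\<^bsub>R\<^esub> K)) c \<inter> ?p I)"
      using pw quot_inter[OF assms(3,5,6) ideal_pow_carrier[OF R Jc]] by simp
    finally show "ideal_pow ?Q (?p (J <+>\<^bsub>R\<^esub> K)) n \<inter> ?p I =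
          ideal_prod ?Q (ideal_pow ?Q (?p (J <+>\<^bsub>R\<^esub> K)) (n - c))
             (ideal_pow ?Q (?p (J <+>\<^bsub>R\<^esub> K)) c \<inter> ?p I)" .
  qed
  show "\<exists>c'\<in>{c::nat. \<forall>n\<ge>c. ideal_pow ?Q (?p (J <+>\<^bsub>R\<^esub> K)) n \<inter> ?p I =
          ideal_prod ?Q (ideal_pow ?Q (?p (J <+>\<^bsub>R\<^esub> K)) (n - c))
             (ideal_pow ?Q (?p (J <+>\<^bsub>R\<^esub> K)) c \<inter> ?p I)}. enat c' \<le> enat c"
    by (rule bexI[of _ c]) (simp, rule CollectI, rule P)
qed

end
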